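(* Let $T\in V_L^*$ and let $n$ be a positive integer. Let $I$ and $J$ be levels of the column $C_n$. Let $j$ be such that $v_j=(u_1,\dots,u_L)$ satisfies $u_L<h_n$. For $i\in\mathbb N$ define $t(i)=2h_{\ell(i)}$ where $\ell(i)=2^{j-1}+(i+n)2^j$. Then the sets $T^{-t(i)}J$, $i\in\mathbb N$, are independent with respect to the conditional probability measure $\mu_I$, and the sets $T^{t(i)}I$, $i\in\mathbb N$, are independent with respect to $\mu_J$.
   Context: Let $L\ge1$ and $V_L=\{(u_1,\dots,u_L)\in\mathbb N^L: u_1<u_2<\dots<u_L\}$. Fix an enumeration $V_L=\{v_j:j\in\mathbb N\}$ and define $s:\mathbb N\to V_L$ by $s(2^{j-1}+i2^j)=v_j$ for $j\ge1$, $i\ge0$. Let $(r_n)$ be a nondecreasing sequence of positive integers with $r_n>L$. Start with the column $C_1=[0,1)$ (height $h_1=1$). Given the column $C_n$ of height $h_n$, write $s(n)=(u_1,\dots,u_L)$ and $\sigma=u_1+\dots+u_L$. Cut $C_n$ into $r_n$ subcolumns of equal width numbered $1,\dots,r_n$ from left to right; place $(2L+1)h_n+\sigma$ spacers on top of subcolumn $i$ for $1\le i\le r_n-L-1$, and $h_n+u_d$ spacers on top of subcolumn $r_n-L-1+d$ for $1\le d\le L$; stack each subcolumn on top of the subcolumn to its left, forming a column of height $g_n=r_nh_n+(r_n-L-1)((2L+1)h_n+\sigma)+(Lh_n+\sigma)$; finally place $g_n$ further spacers on top to obtain $C_{n+1}$ of height $h_{n+1}=2g_n$. This defines $T$ preserving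 Lebesgue measure $\mu$ on $X=\bigcup_n C_n$; $V_L^*$ is the family of all such $T$. For a set $I$ of finite positive measure, $\mu_I(A)=\mu(A\cap I)/\mu(I)$. *)

theory Defs
  imports "HOL-Probability.Probability"
begin

text \<open>Columns are indexed by n \<ge> 1; column n has hgt n levels, level k (0-based, from the
  bottom) being the interval [lev n k, lev n k + w n) of width w n.  Subcolumns are
  numbered 0..r n - 1 from left to right (0-based), sequences s n are lists of length L.\<close>

definition is_VL :: "nat \<Rightarrow> nat list \<Rightarrow> bool" where
  "is_VL L us \<longleftrightarrow> length us = L \<and> sorted_wrt (<) us \<and> (\<forall>u\<in>set us. 0 < u)"

text \<open>Height h_n of column C_n (h_0 is an unused junk value).\<close>
fun hgt :: "nat \<Rightarrow> (nat \<Rightarrow> nat) \<Rightarrow> (nat \<Rightarrow> nat list) \<Rightarrow> nat \<Rightarrow> nat" where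
  "hgt L r s 0 = 1"
| "hgt L r s (Suc n) =
     (if n = 0 then 1
      else 2 * (r n * hgt L r s n
                + (r n - L - 1) * ((2 * L + 1) * hgt L r s n + sum_list (s n))
                + (L * hgt L r s n + sum_list (s n))))"

text \<open>Number of spacers put on top of subcolumn c (0-based) of C_n.\<close>
definition spacer :: "nat \<Rightarrow> (nat \<Rightarrow> nat) \<Rightarrow> (nat \<Rightarrow> nat list) \<Rightarrow> nat \<Rightarrow> nat \<Rightarrow> nat" where
  "spacer L r s n c =
     (if c < r n - L - 1 then (2 * L + 1) * hgt L r s n + sum_list (s n)
      else hgt L r s n + s n ! (c - (r n - L - 1)))"

text \<open>Position (in C_{n+1}) of the bottom level of subcolumn c of C_n.\<close>
definition offset :: "nat \<Rightarrow> (nat \<Rightarrow> nat) \<Rightarrow> (nat \<Rightarrow> nat list) \<Rightarrow> nat \<Rightarrow> nat \<Rightarrow> nat" where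
  "offset L r s n c = (\<Sum>c'<c. hgt L r s n + spacer L r s n c')"

definition level :: "(nat \<Rightarrow> nat \<Rightarrow> real) \<Rightarrow> (nat \<Rightarrow> real) \<Rightarrow> nat \<Rightarrow> nat \<Rightarrow> real set" where
  "level lev w n k = {lev n k ..< lev n k + w n}"

definition VLstar ::
  "nat \<Rightarrow> (nat \<Rightarrow> nat list) \<Rightarrow> (nat \<Rightarrow> nat list) \<Rightarrow> (nat \<Rightarrow> nat)
   \<Rightarrow> (nat \<Rightarrow> nat \<Rightarrow> real) \<Rightarrow> (nat \<Rightarrow> real) \<Rightarrow> real set \<Rightarrow> (real \<Rightarrow> real) \<Rightarrow> bool" where
  "VLstar L v s r lev w X T \<longleftrightarrow>
     L \<ge> 1 \<and>
     bij_betw v {1..} {us. is_VL L us} \<and>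
     (\<forall>j\<ge>1. \<forall>i. s (2 ^ (j - 1) + i * 2 ^ j) = v j) \<and>
     (\<forall>n\<ge>1. 0 < r n \<and> L < r n \<and> r n \<le> r (Suc n)) \<and>
     w 1 = 1 \<and> lev 1 0 = 0 \<and>
     (\<forall>n\<ge>1. w (Suc n) = w n / real (r n)) \<and>
     (\<forall>n\<ge>1. \<forall>c<r n. \<forall>k<hgt L r s n.
        lev (Suc n) (offset L r s n c + k) = lev n k + real c * w (Suc n)) \<and>
     (\<forall>n\<ge>1. \<forall>k<hgt L r s n. \<forall>k'<hgt L r s n.
        k \<noteq> k' \<longrightarrow> level lev w n k \<inter> level lev w n k' = {}) \<and>
     X = (\<Union>n\<in>{1..}. \<Union>k<hgt L r s n. level lev w n k) \<and>
     (\<forall>n\<ge>1. \<forall>k. k + 1 < hgt L r s n \<longrightarrow>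
        (\<forall>x\<in>level lev w n k. T x = x - lev n k + lev n (k + 1)))"

end

theory Submission
  imports Defs
begin


lemma sum_split_add: "(\<Sum>c<A + e. f c) = (\<Sum>c<A. f c) + (\<Sum>e'<e. f (A + e' :: nat))"
  by (induction e) (auto simp: algebra_simps)

lemma nat_2adic: "(m::nat) \<ge> 1 \<Longrightarrow> \<exists>a i. m = 2 ^ a + i * 2 ^ Suc a"
proof (induction m rule: less_induct)
  case (less m)
  show ?case
  proof (cases "even m")
    case True
    then obtain m' where m': "m = 2 * m'" by auto
    with less have "m' \<ge> 1" "m' < m" by auto
    with less obtain a i where "m' = 2 ^ a + i * 2 ^ Suc a" by blast
    then have "m = 2 ^ Suc a + i * 2 ^ Suc (Suc a)" using m' by simp
    then show ?thesis by blast
  next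
    case False
    then have "m = m div 2 * 2 + 1" by presburger
    then show ?thesis by (intro exI[of _ 0] exI[of _ "m div 2"]) simp
  qed
qed

locale VL =
  fixes L :: nat and v s :: "nat \<Rightarrow> nat list" and r :: "nat \<Rightarrow> nat"
    and lev :: "nat \<Rightarrow> nat \<Rightarrow> real" and w :: "nat \<Rightarrow> real"
    and X :: "real set" and T :: "real \<Rightarrow> real"
  assumes VL: "VLstar L v s r lev w X T"
begin

abbreviation "h m \<equiv> hgt L r s m"
abbreviation "Lv m p \<equiv> level lev w m p"
abbreviation "off m c \<equiv> offset L r s m c"
abbreviation "sp m c \<equiv> spacer L r s m c"

lemma L1: "L \<ge> 1" using VL by (simp add: VLstar_def)
lemma v_VL: "j \<ge> 1 \<Longrightarrow> is_VL L (v j)"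
  using VL unfolding VLstar_def bij_betw_def by auto
lemma s_v: "j \<ge> 1 \<Longrightarrow> s (2 ^ (j - 1) + i * 2 ^ j) = v j"
  using VL unfolding VLstar_def by auto
lemma r_gt: "m \<ge> 1 \<Longrightarrow> L < r m" using VL unfolding VLstar_def by auto
lemma w_Suc: "m \<ge> 1 \<Longrightarrow> w (Suc m) = w m / real (r m)" using VL unfolding VLstar_def by auto
lemma lev_child0: "m \<ge> 1 \<Longrightarrow> c < r m \<Longrightarrow> k < h m \<Longrightarrow>
   lev (Suc m) (off m c + k) = lev m k + real c * w (Suc m)"
  using VL unfolding VLstar_def by auto
lemma disj0: "m \<ge> 1 \<Longrightarrow> k < h m \<Longrightarrow> k' < h m \<Longrightarrow> k \<noteq> k' \<Longrightarrow> Lv m k \<inter> Lv m k' = {}"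
  using VL unfolding VLstar_def by auto
lemma X_def': "X = (\<Union>n\<in>{1..}. \<Union>k<h n. Lv n k)" using VL unfolding VLstar_def by auto
lemma T_step: "m \<ge> 1 \<Longrightarrow> k + 1 < h m \<Longrightarrow> x \<in> Lv m k \<Longrightarrow> T x = x - lev m k + lev m (k + 1)"
  using VL unfolding VLstar_def by auto

lemma s_len: "m \<ge> 1 \<Longrightarrow> length (s m) = L"
proof -
  assume "m \<ge> 1"
  then obtain a i where "m = 2 ^ a + i * 2 ^ Suc a" using nat_2adic by blast
  then have "m = 2 ^ (Suc a - 1) + i * 2 ^ Suc a" by simp
  then have "s m = v (Suc a)" using s_v[of "Suc a" i] by simp
  then show ?thesis using v_VL[of "Suc a"] by (simp add: is_VL_def)
qed

lemma w_pos: "m \<ge> 1 \<Longrightarrow> w m > 0"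
proof (induction m rule: nat_induct_at_least)
  case base then show ?case using VL by (simp add: VLstar_def)
next
  case (Suc m) then show ?case using w_Suc[of m] r_gt[of m] by simp
qed

lemma h_pos: "h m \<ge> 1"
proof (induction m)
  case 0 then show ?case by simp
next
  case (Suc m)
  show ?case
  proof (cases "m = 0")
    case True then show ?thesis by simp
  next
    case False
    then have "r m \<ge> 1" using r_gt[of m] by simp
    then have "r m * h m \<ge> 1" using Suc.IH by (simp add: Suc_le_eq)
    moreover have "h (Suc m) \<ge> r m * h m" using False by simp
    ultimately show ?thesis by linarith
  qed
qed


lemma sp_ge: "sp m c \<ge> h m"
  unfolding spacer_def by auto

lemma off_Suc: "off m (Suc c) = off m c + h m + sp m c"
  unfolding offset_def by simp

lemma off_0: "off m 0 = 0"
  unfolding offset_def by simp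

lemma off_mono: "c < c' \<Longrightarrow> off m c + h m + sp m c \<le> off m c'"
proof (induction c')
  case 0 then show ?case by simp
next
  case (Suc c')
  then show ?case using off_Suc[of m c'] by (cases "c = c'") auto
qed

lemma off_mono': "c \<le> c' \<Longrightarrow> off m c \<le> off m c'"
  using off_mono[of c c' m] by (cases "c = c'") auto

lemma sp_big: "c < r m - L - 1 \<Longrightarrow> sp m c = (2 * L + 1) * h m + sum_list (s m)"
  unfolding spacer_def by simp

lemma sp_small: "e < L \<Longrightarrow> sp m (r m - L - 1 + e) = h m + s m ! e"
  unfolding spacer_def by simp

lemma off_total: assumes "m \<ge> 1" shows "h (Suc m) = 2 * (off m (r m - 1) + h m)"
proof -
  obtain R where R: "r m = R + L + 1" using r_gt[OF assms] by (metis add.commute less_imp_Suc_add add_Suc_right Suc_eq_plus1)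
  have len: "length (s m) = L" using s_len[OF assms] .
  have sig: "sum_list (s m) = (\<Sum>e<L. s m ! e)"
    using len by (simp add: sum_list_sum_nth atLeast0LessThan)
  have "off m (r m - 1) = (\<Sum>c<R + L. h m + sp m c)"
    unfolding offset_def R by simp
  also have "\<dots> = (\<Sum>c<R. h m + sp m c) + (\<Sum>e<L. h m + sp m (R + e))"
    by (rule sum_split_add)
  also have "(\<Sum>c<R. h m + sp m c) = (\<Sum>c<R. h m + ((2 * L + 1) * h m + sum_list (s m)))"
    by (rule sum.cong) (auto simp: R sp_big)
  also have "(\<Sum>e<L. h m + sp m (R + e)) = (\<Sum>e<L. h m + (h m + s m ! e))"
  proof (rule sum.cong)
    fix e assume "e \<in> {..<L}"
    then show "h m + sp m (R + e) = h m + (h m + s m ! e)"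
      using sp_small[of e m] R by simp
  qed simp
  finally have "off m (r m - 1) = R * (h m + ((2 * L + 1) * h m + sum_list (s m))) + (2 * L * h m + sum_list (s m))"
    by (simp add: sum.distrib sig)
  moreover have "h (Suc m) = 2 * (r m * h m + (r m - L - 1) * ((2 * L + 1) * h m + sum_list (s m))
                + (L * h m + sum_list (s m)))"
    using assms by simp
  ultimately show ?thesis unfolding R by (simp add: algebra_simps)
qed

lemma child_lt: assumes "m \<ge> 1" "c < r m" "a < h m" shows "off m c + a < h (Suc m)"
proof -
  have "off m c \<le> off m (r m - 1)" using assms by (intro off_mono') auto
  then show ?thesis using off_total[OF assms(1)] assms by simp
qed

lemma off_ge1: assumes "m \<ge> 1" shows "off m (r m - 1) \<ge> h m"
proof -
  have "0 < r m - 1" using r_gt[OF assms] L1 by simp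
  then have "off m 0 + h m + sp m 0 \<le> off m (r m - 1)" by (rule off_mono)
  then show ?thesis by simp
qed

lemma pos_inj: assumes "off m c + a = off m c' + a'" "a < h m" "a' < h m"
  shows "c = c' \<and> a = a'"
proof -
  have "c = c'"
  proof (rule ccontr)
    assume "c \<noteq> c'"
    then consider "c < c'" | "c' < c" by linarith
    then show False
    proof cases
      case 1 then have "off m c + h m \<le> off m c'" using off_mono[of c c' m] by simp
      then show False using assms by simp
    next
      case 2 then have "off m c' + h m \<le> off m c" using off_mono[of c' c m] by simp
      then show False using assms by simp
    qed
  qed
  then show ?thesis using assms by simp
qed

lemma level_ne: "m \<ge> 1 \<Longrightarrow> Lv m p \<noteq> {}"
  using w_pos[of m] unfolding level_def by auto

lemma level_meas[simp]: "Lv m p \<in> sets lebesgue"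
  unfolding level_def by simp

lemma level_measure: "m \<ge> 1 \<Longrightarrow> measure lebesgue (Lv m p) = w m"
  using w_pos[of m] unfolding level_def by simp

lemma level_emeasure: "emeasure lebesgue (Lv m p) \<noteq> \<infinity>"
  unfolding level_def by (cases "lev m p \<le> lev m p + w m") auto

lemma disj: "m \<ge> 1 \<Longrightarrow> k < h m \<Longrightarrow> k' < h m \<Longrightarrow> x \<in> Lv m k \<Longrightarrow> x \<in> Lv m k' \<Longrightarrow> k = k'"
  using disj0 by blast

lemma child_eq: assumes "m \<ge> 1" "c < r m" "a < h m"
  shows "Lv (Suc m) (off m c + a) = {lev m a + real c * w (Suc m) ..< lev m a + real c * w (Suc m) + w (Suc m)}"
  unfolding level_def using lev_child0[OF assms] by simp

lemma child_sub: assumes "m \<ge> 1" "c < r m" "a < h m"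
  shows "Lv (Suc m) (off m c + a) \<subseteq> Lv m a"
proof -
  have wm: "w m = real (r m) * w (Suc m)" using w_Suc[OF assms(1)] r_gt[OF assms(1)] by simp
  have "real c * w (Suc m) + w (Suc m) \<le> real (r m) * w (Suc m)"
    using assms(2) w_pos[of "Suc m"] assms(1)
    by (metis Suc_leI add.commute mult.commute mult_le_cancel_left_pos mult_Suc_right of_nat_Suc of_nat_le_iff le_SucI one_le_mult_iff distrib_left mult_1_right)
  moreover have "0 \<le> real c * w (Suc m)" using w_pos[of "Suc m"] by simp
  ultimately show ?thesis unfolding child_eq[OF assms] unfolding level_def wm by auto
qed

lemma refine: assumes "m \<ge> 1" "a < h m"
  shows "Lv m a = (\<Union>c<r m. Lv (Suc m) (off m c + a))"
proof
  show "(\<Union>c<r m. Lv (Suc m) (off m c + a)) \<subseteq> Lv m a" using child_sub assms by blast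
next
  show "Lv m a \<subseteq> (\<Union>c<r m. Lv (Suc m) (off m c + a))"
  proof
    fix x assume x: "x \<in> Lv m a"
    define w' where "w' = w (Suc m)"
    have w'p: "w' > 0" using w_pos[of "Suc m"] w'_def by simp
    have wm: "w m = real (r m) * w'" using w_Suc[OF assms(1)] r_gt[OF assms(1)] w'_def by simp
    define y where "y = (x - lev m a) / w'"
    have y0: "0 \<le> y" using x w'p unfolding y_def level_def by auto
    have yr: "y < real (r m)" using x w'p unfolding y_def level_def wm by (auto simp: field_simps)
    define c where "c = nat \<lfloor>y\<rfloor>"
    have c1: "real c \<le> y" "y < real c + 1" unfolding c_def using y0 by linarith+
    have cr: "c < r m" using c1 yr by linarith
    have "lev m a + real c * w' \<le> x" "x < lev m a + real c * w' + w'"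
      using c1 w'p unfolding y_def by (auto simp: field_simps)
    then have "x \<in> Lv (Suc m) (off m c + a)" unfolding child_eq[OF assms(1) cr assms(2)] w'_def by simp
    then show "x \<in> (\<Union>c<r m. Lv (Suc m) (off m c + a))" using cr by blast
  qed
qed


lemma h_Suc_ge: "m \<ge> 1 \<Longrightarrow> h m \<le> h (Suc m)"
  using off_total[of m] by simp

lemma h_mono: assumes "1 \<le> n" "n \<le> M" shows "h n \<le> h M"
  using assms(2)
proof (induction M rule: dec_induct)
  case base then show ?case by simp
next
  case (step M) then show ?case using h_Suc_ge[of M] assms by simp
qed

lemma ncc: assumes "m \<ge> 1" "c < r m" "off m c + h m \<le> q" "c + 1 < r m \<longrightarrow> q < off m (Suc c)"
  shows "\<forall>c'<r m. \<forall>a<h m. q \<noteq> off m c' + a"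
proof (intro allI impI)
  fix c' a assume c': "c' < r m" and a: "a < h m"
  show "q \<noteq> off m c' + a"
  proof (cases c' c rule: linorder_cases)
    case less then have "off m c' + h m \<le> off m c" using off_mono[of c' c m] by simp
    then show ?thesis using a assms by simp
  next
    case equal then show ?thesis using a assms by simp
  next
    case greater then have "off m (Suc c) \<le> off m c'" using off_mono'[of "Suc c" c'] by simp
    then show ?thesis using greater c' assms by auto
  qed
qed

lemma nc: assumes "m \<ge> 1" "q < h (Suc m)" "\<forall>c'<r m. \<forall>a<h m. q \<noteq> off m c' + a" "a < h m"
  shows "Lv (Suc m) q \<inter> Lv m a = {}"
proof -
  { fix x assume x: "x \<in> Lv (Suc m) q" "x \<in> Lv m a"
    then obtain c where c: "c < r m" "x \<in> Lv (Suc m) (off m c + a)" using refine[OF assms(1,4)] by blast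
    have "q = off m c + a"
      using disj[of "Suc m" q "off m c + a" x] x c child_lt[OF assms(1) c(1) assms(4)] assms by simp
    then have False using assms c by blast }
  then show ?thesis by blast
qed

definition nonC :: "nat \<Rightarrow> nat \<Rightarrow> nat \<Rightarrow> bool" where
  "nonC n M q \<longleftrightarrow> (\<forall>\<kappa><h n. Lv M q \<inter> Lv n \<kappa> = {})"

lemma cover: assumes "1 \<le> n" "n \<le> M" "\<kappa> < h n" shows "Lv n \<kappa> \<subseteq> (\<Union>a<h M. Lv M a)"
  using assms(2)
proof (induction M rule: dec_induct)
  case base then show ?case using assms by blast
next
  case (step M)
  have M1: "M \<ge> 1" using step assms by simp
  have "(\<Union>a<h M. Lv M a) \<subseteq> (\<Union>a<h (Suc M). Lv (Suc M) a)"
  proof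
    fix x assume "x \<in> (\<Union>a<h M. Lv M a)"
    then obtain a where a: "a < h M" "x \<in> Lv M a" by blast
    then obtain c where "c < r M" "x \<in> Lv (Suc M) (off M c + a)" using refine[OF M1 a(1)] by blast
    then show "x \<in> (\<Union>a<h (Suc M). Lv (Suc M) a)" using child_lt[OF M1 _ a(1)] by blast
  qed
  then show ?case using step by blast
qed

lemma noncopy_nonC: assumes "1 \<le> n" "n \<le> M" "q < h (Suc M)" "\<forall>c'<r M. \<forall>a<h M. q \<noteq> off M c' + a"
  shows "nonC n (Suc M) q"
  unfolding nonC_def
proof (intro allI impI)
  fix \<kappa> assume k: "\<kappa> < h n"
  have M1: "M \<ge> 1" using assms by simp
  show "Lv (Suc M) q \<inter> Lv n \<kappa> = {}"
    using cover[OF assms(1,2) k] nc[OF M1 assms(3,4)] by blast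
qed

lemma nest: assumes "1 \<le> n" "n \<le> M" "a < h M"
  shows "(\<exists>\<kappa><h n. Lv M a \<subseteq> Lv n \<kappa>) \<or> nonC n M a"
  using assms(2,3)
proof (induction M arbitrary: a rule: dec_induct)
  case base then show ?case by blast
next
  case (step M q)
  have M1: "M \<ge> 1" using step assms by simp
  show ?case
  proof (cases "\<exists>c<r M. \<exists>a<h M. q = off M c + a")
    case True
    then obtain c a where ca: "c < r M" "a < h M" "q = off M c + a" by blast
    have sub: "Lv (Suc M) q \<subseteq> Lv M a" using child_sub[OF M1 ca(1,2)] ca by simp
    from step.IH[OF ca(2)] show ?thesis
    proof
      assume "\<exists>\<kappa><h n. Lv M a \<subseteq> Lv n \<kappa>" then show ?thesis using sub by blast
    next
      assume "nonC n M a" then show ?thesis using sub unfolding nonC_def by blast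
    qed
  next
    case False
    then show ?thesis using noncopy_nonC[OF assms(1) step.hyps(1) step.prems] by blast
  qed
qed

lemma nest_in: assumes "1 \<le> n" "n \<le> M" "a < h M" "\<kappa> < h n" "x \<in> Lv M a" "x \<in> Lv n \<kappa>"
  shows "Lv M a \<subseteq> Lv n \<kappa>"
proof -
  from nest[OF assms(1-3)] show ?thesis
  proof
    assume "\<exists>\<kappa><h n. Lv M a \<subseteq> Lv n \<kappa>"
    then obtain \<kappa>' where k': "\<kappa>' < h n" "Lv M a \<subseteq> Lv n \<kappa>'" by blast
    then have "\<kappa>' = \<kappa>" using disj[of n \<kappa>' \<kappa> x] assms by auto
    then show ?thesis using k' by simp
  next
    assume "nonC n M a" then show ?thesis using assms unfolding nonC_def by blast
  qed
qed

end


context VL begin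

lemma level_ne_Suc: "Lv (Suc m) p \<noteq> {}"
  using level_ne[of "Suc m" p] by simp

lemma nonC_sub: "Lv M' q \<subseteq> Lv M a \<Longrightarrow> nonC n M a \<Longrightarrow> nonC n M' q"
  unfolding nonC_def by blast

lemma is_copy: assumes "1 \<le> n" "n \<le> M" "P < h (Suc M)" "\<kappa> < h n" "Lv (Suc M) P \<subseteq> Lv n \<kappa>"
  shows "\<exists>c<r M. \<exists>a<h M. P = off M c + a"
proof (rule ccontr)
  assume "\<not> ?thesis"
  then have "nonC n (Suc M) P" using noncopy_nonC[OF assms(1,2,3)] by blast
  then show False using assms(4,5) level_ne_Suc[of M P] unfolding nonC_def by blast
qed

lemma struct: assumes n1: "1 \<le> n" and "n \<le> M" "p < h M" "\<kappa> < h n" "Lv M p \<subseteq> Lv n \<kappa>"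
  shows "\<exists>\<beta>. p = \<beta> + \<kappa> \<and> \<beta> + h n \<le> h M \<and> (\<forall>\<kappa>2<h n. Lv M (\<beta>+\<kappa>2) \<subseteq> Lv n \<kappa>2)
     \<and> (\<forall>e. 1 \<le> e \<longrightarrow> e \<le> h n \<longrightarrow> e \<le> \<beta> \<longrightarrow> nonC n M (\<beta> - e))
     \<and> (\<forall>e<h n. \<beta> + h n + e < h M \<longrightarrow> nonC n M (\<beta> + h n + e))"
  using assms(2-5)
proof (induction M arbitrary: p \<kappa> rule: dec_induct)
  case base
  have "p = \<kappa>" using disj[of n p \<kappa>] level_ne[of n p] base n1 by blast
  then show ?case by (intro exI[of _ 0]) auto
next
  case (step M P \<kappa>)
  have M1: "M \<ge> 1" using step n1 by simp
  obtain c a where ca: "c < r M" "a < h M" "P = off M c + a"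
    using is_copy[OF n1 step.hyps(1) step.prems] by blast
  have csub: "Lv (Suc M) P \<subseteq> Lv M a" using child_sub[OF M1 ca(1,2)] ca by simp
  obtain x where x: "x \<in> Lv (Suc M) P" using level_ne_Suc[of M P] by blast
  have aK: "Lv M a \<subseteq> Lv n \<kappa>"
    using nest_in[OF n1 step.hyps(1) ca(2) step.prems(2), of x] x csub step.prems by blast
  obtain \<beta>0 where b0: "a = \<beta>0 + \<kappa>" "\<beta>0 + h n \<le> h M" "\<forall>\<kappa>2<h n. Lv M (\<beta>0+\<kappa>2) \<subseteq> Lv n \<kappa>2"
     "\<forall>e. 1 \<le> e \<longrightarrow> e \<le> h n \<longrightarrow> e \<le> \<beta>0 \<longrightarrow> nonC n M (\<beta>0 - e)"
     "\<forall>e<h n. \<beta>0 + h n + e < h M \<longrightarrow> nonC n M (\<beta>0 + h n + e)"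
    using step.IH[OF ca(2) step.prems(2) aK] by blast
  have hn: "h n \<le> h M" using h_mono[OF n1 step.hyps(1)] .
  have spc: "h M \<le> sp M c" by (rule sp_ge)
  define \<beta> where "\<beta> = off M c + \<beta>0"
  have P: "P = \<beta> + \<kappa>" using ca b0 \<beta>_def by simp
  have h1: "\<beta> + h n \<le> h (Suc M)"
    using child_lt[OF M1 ca(1), of "h M - 1"] b0(2) h_pos[of M] \<beta>_def by simp
  have h2: "\<forall>\<kappa>2<h n. Lv (Suc M) (\<beta>+\<kappa>2) \<subseteq> Lv n \<kappa>2"
  proof (intro allI impI)
    fix \<kappa>2 assume k2: "\<kappa>2 < h n"
    have "\<beta>0 + \<kappa>2 < h M" using k2 b0(2) by simp
    then have "Lv (Suc M) (off M c + (\<beta>0+\<kappa>2)) \<subseteq> Lv M (\<beta>0 + \<kappa>2)" using child_sub[OF M1 ca(1)] by blast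
    then show "Lv (Suc M) (\<beta>+\<kappa>2) \<subseteq> Lv n \<kappa>2" using b0(3) k2 \<beta>_def by (metis add.assoc subset_trans)
  qed
  have h3: "\<forall>e. 1 \<le> e \<longrightarrow> e \<le> h n \<longrightarrow> e \<le> \<beta> \<longrightarrow> nonC n (Suc M) (\<beta> - e)"
  proof (intro allI impI)
    fix e assume e: "1 \<le> e" "e \<le> h n" "e \<le> \<beta>"
    show "nonC n (Suc M) (\<beta> - e)"
    proof (cases "e \<le> \<beta>0")
      case True
      have "\<beta>0 - e < h M" using b0(2) e h_pos[of n] by linarith
      then have "Lv (Suc M) (off M c + (\<beta>0 - e)) \<subseteq> Lv M (\<beta>0 - e)" using child_sub[OF M1 ca(1)] by blast
      moreover have "off M c + (\<beta>0 - e) = \<beta> - e" using True \<beta>_def by simp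
      ultimately show ?thesis using nonC_sub b0(4) e True by metis
    next
      case False
      have "c \<noteq> 0"
      proof
        assume "c = 0" then show False using e \<beta>_def off_0[of M] False by simp
      qed
      then obtain c0 where c0: "c = Suc c0" by (cases c) auto
      have os: "off M c = off M c0 + h M + sp M c0" using off_Suc c0 by simp
      have "h M \<le> sp M c0" by (rule sp_ge)
      then have q1: "off M c0 + h M \<le> \<beta> - e" using os e hn \<beta>_def by linarith
      have "\<beta> - e < off M c" using False \<beta>_def e by linarith
      then have q2: "\<beta> - e < off M (Suc c0)" using c0 by simp
      have q3: "\<beta> - e < h (Suc M)" using h1 e h_pos[of n] by linarith
      have "\<forall>c'<r M. \<forall>a<h M. \<beta> - e \<noteq> off M c' + a"
        using ncc[OF M1 _ q1] q2 ca(1) c0 by simp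
      then show ?thesis using noncopy_nonC[OF n1 step.hyps(1) q3] by blast
    qed
  qed
  have h4: "\<forall>e<h n. \<beta> + h n + e < h (Suc M) \<longrightarrow> nonC n (Suc M) (\<beta> + h n + e)"
  proof (intro allI impI)
    fix e assume e: "e < h n" "\<beta> + h n + e < h (Suc M)"
    show "nonC n (Suc M) (\<beta> + h n + e)"
    proof (cases "\<beta>0 + h n + e < h M")
      case True
      then have "Lv (Suc M) (off M c + (\<beta>0 + h n + e)) \<subseteq> Lv M (\<beta>0 + h n + e)" using child_sub[OF M1 ca(1)] by blast
      moreover have "off M c + (\<beta>0 + h n + e) = \<beta> + h n + e" using \<beta>_def by simp
      ultimately show ?thesis using nonC_sub b0(5) e True by metis
    next
      case False
      then have q1: "off M c + h M \<le> \<beta> + h n + e" using \<beta>_def by simp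
      have "\<beta> + h n + e < off M (Suc c)" using off_Suc[of M c] spc b0(2) e \<beta>_def by linarith
      then have "\<forall>c'<r M. \<forall>a<h M. \<beta> + h n + e \<noteq> off M c' + a"
        using ncc[OF M1 ca(1) q1] by simp
      then show ?thesis using noncopy_nonC[OF n1 step.hyps(1) e(2)] by blast
    qed
  qed
  show ?case using P h1 h2 h3 h4 by blast
qed

end


context VL begin

lemma Tpow: assumes "m \<ge> 1" "p + t < h m" "x \<in> Lv m p"
  shows "(T ^^ t) x = x - lev m p + lev m (p + t) \<and> (T ^^ t) x \<in> Lv m (p + t)"
  using assms(2)
proof (induction t)
  case 0 then show ?case using assms(3) by simp
next
  case (Suc t)
  then have IH: "(T ^^ t) x = x - lev m p + lev m (p + t)" "(T ^^ t) x \<in> Lv m (p + t)" by auto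
  have "T ((T ^^ t) x) = (T ^^ t) x - lev m (p + t) + lev m (p + t + 1)"
    using T_step[OF assms(1) _ IH(2)] Suc.prems by simp
  then have eq: "(T ^^ Suc t) x = x - lev m p + lev m (p + Suc t)" using IH(1) by simp
  moreover have "(T ^^ Suc t) x \<in> Lv m (p + Suc t)"
    using IH(2) eq unfolding level_def by (auto simp: IH(1))
  ultimately show ?case by simp
qed

lemma Tpow_image: assumes "m \<ge> 1" "p + t < h m"
  shows "(T ^^ t) ` Lv m p = Lv m (p + t)"
proof
  show "(T ^^ t) ` Lv m p \<subseteq> Lv m (p + t)" using Tpow[OF assms] by blast
next
  show "Lv m (p + t) \<subseteq> (T ^^ t) ` Lv m p"
  proof
    fix z assume z: "z \<in> Lv m (p + t)"
    define x where "x = z - lev m (p + t) + lev m p"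
    have x: "x \<in> Lv m p" using z unfolding x_def level_def by auto
    have "(T ^^ t) x = z" using Tpow[OF assms x] x_def by simp
    then show "z \<in> (T ^^ t) ` Lv m p" using x by blast
  qed
qed

lemma level_X: "m \<ge> 1 \<Longrightarrow> p < h m \<Longrightarrow> Lv m p \<subseteq> X"
  using X_def' by auto

lemma lift: assumes "M0 \<ge> 1" "p0 < h M0" "x \<in> Lv M0 p0" "M0 \<le> M"
  shows "\<exists>p<h M. x \<in> Lv M p"
  using assms(4)
proof (induction M rule: dec_induct)
  case base then show ?case using assms by blast
next
  case (step M)
  have M1: "M \<ge> 1" using step assms by simp
  obtain p where p: "p < h M" "x \<in> Lv M p" using step by blast
  then obtain c where "c < r M" "x \<in> Lv (Suc M) (off M c + p)" using refine[OF M1 p(1)] by blast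
  then show ?case using child_lt[OF M1 _ p(1)] by blast
qed

lemma h_ge: "m \<ge> 1 \<Longrightarrow> h m \<ge> m"
proof (induction m rule: nat_induct_at_least)
  case base then show ?case using h_pos[of 1] by simp
next
  case (Suc m) then show ?case using off_total[of m] off_ge1[of m] by simp
qed

lemma room: assumes "x \<in> X" shows "\<exists>M\<ge>n. \<exists>p. p + t < h M \<and> x \<in> Lv M p"
proof -
  obtain M0 p0 where M0: "M0 \<ge> 1" "p0 < h M0" "x \<in> Lv M0 p0" using assms X_def' by auto
  define M where "M = max M0 (max n t)"
  have M1: "M \<ge> 1" using M0 M_def by simp
  have "M0 \<le> M" using M_def by simp
  then obtain p where p: "p < h M" "x \<in> Lv M p" using lift[OF M0] by blast
  then obtain c where c: "c < r M" "x \<in> Lv (Suc M) (off M c + p)" using refine[OF M1 p(1)] by blast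
  have "off M c \<le> off M (r M - 1)" using c by (intro off_mono') auto
  then have "off M c + p + h M < h (Suc M)" using off_total[OF M1] off_ge1[OF M1] p by simp
  moreover have "t \<le> h M" using h_ge[OF M1] M_def by simp
  ultimately have "off M c + p + t < h (Suc M)" by simp
  moreover have "Suc M \<ge> n" using M_def by simp
  ultimately show ?thesis using c by blast
qed

definition ncopy :: "nat \<Rightarrow> nat \<Rightarrow> bool" where
  "ncopy m q \<longleftrightarrow> (\<forall>c'<r m. \<forall>a<h m. q \<noteq> off m c' + a)"

lemma q_lt: assumes "m \<ge> 1" "c < r m" "b < h m" shows "off m c + b + 2 * h m < h (Suc m)"
proof -
  have "off m c \<le> off m (r m - 1)" using assms by (intro off_mono') auto
  then show ?thesis using off_total[OF assms(1)] off_ge1[OF assms(1)] assms by simp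
qed

lemma q_copy: assumes "m \<ge> 1" "e < L" "c = r m - L - 1 + e" "s m ! e \<le> b"
  shows "off m c + b + 2 * h m = off m (Suc c) + (b - s m ! e) \<and> Suc c < r m"
proof -
  have "sp m c = h m + s m ! e" using sp_small[OF assms(2)] assms(3) by simp
  then have "off m (Suc c) = off m c + 2 * h m + s m ! e" using off_Suc[of m c] by simp
  moreover have "Suc c < r m" using assms r_gt[OF assms(1)] by simp
  ultimately show ?thesis using assms(4) by simp
qed

lemma q_noncopy: assumes "m \<ge> 1" "c < r m" "b < h m"
    "\<not> (\<exists>e<L. c = r m - L - 1 + e \<and> s m ! e \<le> b)"
  shows "ncopy m (off m c + b + 2 * h m)"
proof -
  have rg: "L < r m" using r_gt[OF assms(1)] .
  have L1': "L \<ge> 1" using L1 .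
  have lo: "off m c + h m \<le> off m c + b + 2 * h m" by simp
  have hi: "c + 1 < r m \<longrightarrow> off m c + b + 2 * h m < off m (Suc c)"
  proof
    assume c1: "c + 1 < r m"
    show "off m c + b + 2 * h m < off m (Suc c)"
    proof (cases "c < r m - L - 1")
      case True
      have "sp m c = (2 * L + 1) * h m + sum_list (s m)" using sp_big[OF True] .
      moreover have "3 * h m \<le> (2 * L + 1) * h m" by (rule mult_le_mono1) (use L1' in simp)
      ultimately have "sp m c \<ge> 3 * h m" by linarith
      then show ?thesis using off_Suc[of m c] assms(3) by linarith
    next
      case False
      define e where "e = c - (r m - L - 1)"
      have e: "e < L" "c = r m - L - 1 + e" using False c1 rg e_def by auto
      then have "b < s m ! e" using assms(4) by auto
      moreover have "sp m c = h m + s m ! e" using sp_small[OF e(1)] e(2) by simp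
      ultimately show ?thesis using off_Suc[of m c] assms(3) by simp
    qed
  qed
  show ?thesis using ncc[OF assms(1,2) lo hi] unfolding ncopy_def .
qed

end


context VL begin

lemma lev_int_fin: "emeasure lebesgue (Lv m p \<inter> S) \<noteq> \<infinity>"
proof -
  have "emeasure lebesgue (Lv m p \<inter> S) \<le> emeasure lebesgue (Lv m p)"
    by (rule emeasure_mono) auto
  then show ?thesis using level_emeasure[of m p] by (auto simp: top_unique)
qed

lemma split_measure: assumes "M \<ge> 1" "p < h M" "S \<in> sets lebesgue"
  shows "measure lebesgue (Lv M p \<inter> S) = (\<Sum>c<r M. measure lebesgue (Lv (Suc M) (off M c + p) \<inter> S))"
proof -
  have "Lv M p \<inter> S = (\<Union>c<r M. Lv (Suc M) (off M c + p) \<inter> S)"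
    using refine[OF assms(1,2)] by blast
  moreover have "measure lebesgue (\<Union>c<r M. Lv (Suc M) (off M c + p) \<inter> S)
     = (\<Sum>c<r M. measure lebesgue (Lv (Suc M) (off M c + p) \<inter> S))"
  proof (rule measure_finite_Union)
    show "disjoint_family_on (\<lambda>c. Lv (Suc M) (off M c + p) \<inter> S) {..<r M}"
      unfolding disjoint_family_on_def
    proof (intro ballI impI)
      fix c c' assume c: "c \<in> {..<r M}" "c' \<in> {..<r M}" "c \<noteq> c'"
      have "off M c + p \<noteq> off M c' + p" using pos_inj[of M c p c' p] c assms by auto
      then show "Lv (Suc M) (off M c + p) \<inter> S \<inter> (Lv (Suc M) (off M c' + p) \<inter> S) = {}"
      proof -
        have "off M c + p < h (Suc M)" "off M c' + p < h (Suc M)"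
          using child_lt[OF assms(1) _ assms(2)] c by auto
        then show ?thesis using disj[of "Suc M" "off M c + p" "off M c' + p"] \<open>off M c + p \<noteq> off M c' + p\<close> by auto
      qed
    qed
  qed (use assms lev_int_fin in auto)
  ultimately show ?thesis by simp
qed

lemma prodform:
  fixes Base :: "real set" and Ev :: "nat \<Rightarrow> real set" and ell :: "nat \<Rightarrow> nat"
    and Cg :: "nat \<Rightarrow> nat set" and \<delta> :: nat
  assumes n1: "1 \<le> n" and ellmono: "strict_mono ell" and elln: "\<forall>i. n \<le> ell i"
    and evm: "\<forall>i. Ev i \<in> sets lebesgue"
    and Cgsub: "\<forall>i. Cg i \<subseteq> {..<r (ell i)}" and Cgcard: "\<forall>i. card (Cg i) = \<delta>"
    and H: "\<forall>i b c. b < h (ell i) \<longrightarrow> Lv (ell i) b \<subseteq> Base \<longrightarrow> c < r (ell i) \<longrightarrow>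
        Lv (Suc (ell i)) (off (ell i) c + b) \<inter> Ev i
          = (if c \<in> Cg i then Lv (Suc (ell i)) (off (ell i) c + b) else {})"
    and F: "finite F"
  shows "\<forall>M p. n \<le> M \<longrightarrow> p < h M \<longrightarrow> Lv M p \<subseteq> Base \<longrightarrow> (\<forall>i\<in>F. M \<le> ell i) \<longrightarrow>
     measure lebesgue (Lv M p \<inter> (\<Inter>i\<in>F. Ev i)) = w M * (\<Prod>i\<in>F. real \<delta> / real (r (ell i)))"
  using F
proof (induction F rule: finite_linorder_min_induct)
  case empty
  show ?case using level_measure n1 by auto
next
  case (insert b A)
  define m where "m = ell b"
  have m1: "m \<ge> 1" using elln n1 m_def by (metis order_trans)
  have bA: "b \<notin> A" using insert by blast
  have Am: "\<forall>a\<in>A. Suc m \<le> ell a" using insert ellmono m_def by (auto simp: strict_mono_less Suc_le_eq)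
  define Z where "Z = (\<Inter>i\<in>A. Ev i)"
  have Zm: "Z \<in> sets lebesgue"
  proof (cases "A = {}")
    case True then show ?thesis unfolding Z_def by simp
  next
    case False then show ?thesis unfolding Z_def using evm insert(1) by (intro sets.finite_INT) auto
  qed
  define PA where "PA = (\<Prod>i\<in>A. real \<delta> / real (r (ell i)))"
  have Pins: "(\<Prod>i\<in>insert b A. real \<delta> / real (r (ell i))) = real \<delta> / real (r m) * PA"
    using insert(1) bA PA_def m_def by simp
  have inter: "(\<Inter>i\<in>insert b A. Ev i) = Ev b \<inter> Z" unfolding Z_def by simp
  have rpos: "real (r m) > 0" using r_gt[OF m1] by simp
  have wS: "w (Suc m) = w m / real (r m)" using w_Suc[OF m1] .
  have base: "\<forall>p. p < h m \<longrightarrow> Lv m p \<subseteq> Base \<longrightarrow>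
      measure lebesgue (Lv m p \<inter> (Ev b \<inter> Z)) = w m * (real \<delta> / real (r m) * PA)"
  proof (intro allI impI)
    fix p assume p: "p < h m" "Lv m p \<subseteq> Base"
    have "measure lebesgue (Lv m p \<inter> (Ev b \<inter> Z))
       = (\<Sum>c<r m. measure lebesgue (Lv (Suc m) (off m c + p) \<inter> (Ev b \<inter> Z)))"
      using split_measure[OF m1 p(1)] evm Zm by auto
    also have "\<dots> = (\<Sum>c<r m. if c \<in> Cg b then w (Suc m) * PA else 0)"
    proof (rule sum.cong)
      fix c assume c: "c \<in> {..<r m}"
      have eq: "Lv (Suc m) (off m c + p) \<inter> (Ev b \<inter> Z)
          = (if c \<in> Cg b then Lv (Suc m) (off m c + p) \<inter> Z else {})"
        using H[rule_format, of p b c] p c m_def by auto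
      show "measure lebesgue (Lv (Suc m) (off m c + p) \<inter> (Ev b \<inter> Z))
          = (if c \<in> Cg b then w (Suc m) * PA else 0)"
      proof (cases "c \<in> Cg b")
        case True
        have "Lv (Suc m) (off m c + p) \<subseteq> Base" using child_sub[OF m1 _ p(1)] c p(2) by blast
        moreover have "off m c + p < h (Suc m)" using child_lt[OF m1 _ p(1)] c by simp
        moreover have "n \<le> Suc m" using elln m_def by (metis le_SucI)
        ultimately have "measure lebesgue (Lv (Suc m) (off m c + p) \<inter> Z) = w (Suc m) * PA"
          using insert.IH Am unfolding Z_def PA_def by blast
        then show ?thesis using eq True by simp
      qed (use eq in simp)
    qed simp
    also have "\<dots> = real (card (Cg b)) * (w (Suc m) * PA)"
    proof -
      have "Cg b \<subseteq> {..<r m}" using Cgsub m_def by simp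
      then have "{..<r m} \<inter> Cg b = Cg b" by blast
      then show ?thesis by (simp add: sum.If_cases)
    qed
    also have "\<dots> = w m * (real \<delta> / real (r m) * PA)" using Cgcard wS rpos by simp
    finally show "measure lebesgue (Lv m p \<inter> (Ev b \<inter> Z)) = w m * (real \<delta> / real (r m) * PA)" .
  qed
  have step: "\<forall>M p. M + d = m \<longrightarrow> n \<le> M \<longrightarrow> p < h M \<longrightarrow> Lv M p \<subseteq> Base \<longrightarrow>
      measure lebesgue (Lv M p \<inter> (Ev b \<inter> Z)) = w M * (real \<delta> / real (r m) * PA)" for d
  proof (induction d)
    case 0 then show ?case using base by simp
  next
    case (Suc d)
    show ?case
    proof (intro allI impI)
      fix M p assume M: "M + Suc d = m" "n \<le> M" "p < h M" "Lv M p \<subseteq> Base"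
      have M1: "M \<ge> 1" using M n1 by simp
      have rM: "real (r M) > 0" using r_gt[OF M1] by simp
      have "measure lebesgue (Lv M p \<inter> (Ev b \<inter> Z))
         = (\<Sum>c<r M. measure lebesgue (Lv (Suc M) (off M c + p) \<inter> (Ev b \<inter> Z)))"
        using split_measure[OF M1 M(3)] evm Zm by auto
      also have "\<dots> = (\<Sum>c<r M. w (Suc M) * (real \<delta> / real (r m) * PA))"
      proof (rule sum.cong)
        fix c assume c: "c \<in> {..<r M}"
        have "Lv (Suc M) (off M c + p) \<subseteq> Base" using child_sub[OF M1 _ M(3)] c M(4) by blast
        moreover have "off M c + p < h (Suc M)" using child_lt[OF M1 _ M(3)] c by simp
        ultimately show "measure lebesgue (Lv (Suc M) (off M c + p) \<inter> (Ev b \<inter> Z))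
            = w (Suc M) * (real \<delta> / real (r m) * PA)"
          using Suc.IH M by simp
      qed simp
      also have "\<dots> = w M * (real \<delta> / real (r m) * PA)" using w_Suc[OF M1] rM by simp
      finally show "measure lebesgue (Lv M p \<inter> (Ev b \<inter> Z)) = w M * (real \<delta> / real (r m) * PA)" .
    qed
  qed
  show ?case
  proof (intro allI impI)
    fix M p assume M: "n \<le> M" "p < h M" "Lv M p \<subseteq> Base" "\<forall>i\<in>insert b A. M \<le> ell i"
    then have "M \<le> m" using m_def by simp
    then obtain d where "M + d = m" using le_Suc_ex by blast
    then show "measure lebesgue (Lv M p \<inter> (\<Inter>i\<in>insert b A. Ev i))
        = w M * (\<Prod>i\<in>insert b A. real \<delta> / real (r (ell i)))"
      using step[of d] M inter Pins by simp
  qed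
qed

end



locale VLP = VL +
  fixes n k k' j :: nat
  assumes n1: "1 \<le> n" and kk: "k < hgt L r s n" and kk': "k' < hgt L r s n"
    and j1: "1 \<le> j" and lastv: "last (v j) < hgt L r s n"
begin

definition "ell i = 2 ^ (j - 1) + (i + n) * 2 ^ j"
definition "u = v j"
definition "cond e \<longleftrightarrow> u ! e + k' = k"
definition "\<delta> = card {e. e < L \<and> cond e}"
definition "Cg1 i = (\<lambda>e. r (ell i) - L - 1 + e) ` {e. e < L \<and> cond e}"
definition "Cg2 i = (\<lambda>e. r (ell i) - L + e) ` {e. e < L \<and> cond e}"
definition "E i = {x \<in> X. (T ^^ (2 * h (ell i))) x \<in> Lv n k'}"
definition "G i = (T ^^ (2 * h (ell i))) ` Lv n k"

lemma s_ell: "s (ell i) = u"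
  unfolding ell_def u_def using s_v[OF j1, of "i + n"] by simp

lemma ell_mono: "strict_mono ell"
  unfolding strict_mono_def ell_def by simp

lemma ell_n: "n \<le> ell i"
proof -
  have "n \<le> (i + n) * 2 ^ j" by (metis le_add2 mult_le_mono1 mult.commute one_le_numeral one_le_power mult_1_left order_trans mult_le_mono2)
  then show ?thesis unfolding ell_def by simp
qed

lemma ell1: "1 \<le> ell i" using ell_n n1 by (metis order_trans)

lemma u_lt: assumes "e < L" shows "u ! e < h n"
proof -
  have vl: "is_VL L u" using v_VL[OF j1] u_def by simp
  then have len: "length u = L" and so: "sorted_wrt (<) u" unfolding is_VL_def by auto
  have "u ! e \<le> u ! (L - 1)"
  proof (cases "e = L - 1")
    case False
    then have "e < L - 1" using assms by simp
    then show ?thesis using sorted_wrt_nth_less[OF so, of e "L - 1"] len assms by simp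
  qed simp
  moreover have "u \<noteq> []" using len assms by auto
  then have "last u = u ! (L - 1)" using len by (simp add: last_conv_nth)
  ultimately show ?thesis using lastv u_def by simp
qed

lemma Cg1_card: "card (Cg1 i) = \<delta>"
  unfolding Cg1_def \<delta>_def by (rule card_image) (auto simp: inj_on_def)

lemma Cg2_card: "card (Cg2 i) = \<delta>"
  unfolding Cg2_def \<delta>_def by (rule card_image) (auto simp: inj_on_def)

lemma Cg1_sub: "Cg1 i \<subseteq> {..<r (ell i)}"
  unfolding Cg1_def using r_gt[OF ell1[of i]] by auto

lemma Cg2_sub: "Cg2 i \<subseteq> {..<r (ell i)}"
  unfolding Cg2_def using r_gt[OF ell1[of i]] by auto

lemma lev_eq_nonempty: "M \<ge> 1 \<Longrightarrow> Lv M a \<subseteq> Lv n \<kappa>1 \<Longrightarrow> Lv M a \<subseteq> Lv n \<kappa>2 \<Longrightarrow> \<kappa>1 < h n \<Longrightarrow> \<kappa>2 < h n \<Longrightarrow> \<kappa>1 = \<kappa>2"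
  using level_ne[of M a] disj[OF n1, of \<kappa>1 \<kappa>2] by blast


lemma H1: assumes b: "b < h (ell i)" and sub: "Lv (ell i) b \<subseteq> Lv n k" and c: "c < r (ell i)"
  shows "Lv (Suc (ell i)) (off (ell i) c + b) \<inter> E i
      = (if c \<in> Cg1 i then Lv (Suc (ell i)) (off (ell i) c + b) else {})"
proof -
  define m where "m = ell i"
  have m1: "m \<ge> 1" using ell1 m_def by simp
  have nm: "n \<le> m" using ell_n m_def by simp
  have sm: "s m = u" using s_ell m_def by simp
  define t where "t = 2 * h m"
  define P where "P = Lv (Suc m) (off m c + b)"
  define q where "q = off m c + b + t"
  have bm: "b < h m" "Lv m b \<subseteq> Lv n k" "c < r m" using assms m_def by auto
  obtain \<beta> where st: "b = \<beta> + k" "\<beta> + h n \<le> h m" "\<forall>\<kappa>2<h n. Lv m (\<beta>+\<kappa>2) \<subseteq> Lv n \<kappa>2"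
     "\<forall>e. 1 \<le> e \<longrightarrow> e \<le> h n \<longrightarrow> e \<le> \<beta> \<longrightarrow> nonC n m (\<beta> - e)"
    using struct[OF n1 nm bm(1) kk bm(2)] by blast
  have qlt: "q < h (Suc m)" using q_lt[OF m1 bm(3,1)] q_def t_def by simp
  have Tx: "(T ^^ t) x \<in> Lv (Suc m) q" if "x \<in> P" for x
  proof -
    have "(1::nat) \<le> Suc m" by simp
    moreover have "off m c + b + t < h (Suc m)" using qlt q_def by simp
    moreover have "x \<in> Lv (Suc m) (off m c + b)" using that P_def by simp
    ultimately have "(T ^^ t) x \<in> Lv (Suc m) (off m c + b + t)" using Tpow by blast
    then show ?thesis using q_def by simp
  qed
  have PX: "P \<subseteq> X" using level_X[of "Suc m" "off m c + b"] child_lt[OF m1 bm(3,1)] P_def by simp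
  have Edef: "E i = {x \<in> X. (T ^^ t) x \<in> Lv n k'}" unfolding E_def t_def m_def by simp
  show ?thesis
  proof (cases "c \<in> Cg1 i")
    case True
    then obtain e where e: "e < L" "cond e" "c = r m - L - 1 + e" unfolding Cg1_def m_def by auto
    have uk: "u ! e \<le> b" using e(2) st(1) unfolding cond_def by simp
    have qc: "q = off m (Suc c) + (b - s m ! e)" "Suc c < r m"
      using q_copy[OF m1 e(1) e(3)] uk sm q_def t_def by auto
    have bk: "b - u ! e = \<beta> + k'" using e(2) st(1) unfolding cond_def by simp
    have "\<beta> + k' < h m" using st(2) kk' by simp
    then have "Lv (Suc m) q \<subseteq> Lv m (\<beta> + k')" using child_sub[OF m1 qc(2)] qc(1) bk sm by simp
    also have "\<dots> \<subseteq> Lv n k'" using st(3) kk' by simp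
    finally have "P \<subseteq> E i" using Tx PX Edef by blast
    then show ?thesis using True P_def m_def by auto
  next
    case False
    have "(T ^^ t) x \<notin> Lv n k'" if x: "x \<in> P" for x
    proof (cases "\<exists>e<L. c = r m - L - 1 + e \<and> s m ! e \<le> b")
      case True
      then obtain e where e: "e < L" "c = r m - L - 1 + e" "u ! e \<le> b" using sm by auto
      have nc: "\<not> cond e" using False e unfolding Cg1_def m_def by auto
      have qc: "q = off m (Suc c) + (b - s m ! e)" "Suc c < r m"
        using q_copy[OF m1 e(1) e(2)] e(3) sm q_def t_def by auto
      have bu: "b - u ! e < h m" using bm(1) by simp
      have inb: "(T ^^ t) x \<in> Lv m (b - u ! e)"
        using Tx[OF x] child_sub[OF m1 qc(2) bu] qc(1) sm by auto
      show ?thesis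
      proof (cases "u ! e \<le> k")
        case True
        have "b - u ! e = \<beta> + (k - u ! e)" using True st(1) by simp
        moreover have "k - u ! e < h n" using kk by simp
        ultimately have "Lv m (b - u ! e) \<subseteq> Lv n (k - u ! e)" using st(3) by metis
        then have "(T ^^ t) x \<in> Lv n (k - u ! e)" using inb by blast
        moreover have "k - u ! e \<noteq> k'" using nc True unfolding cond_def by simp
        moreover have "k - u ! e < h n" using kk by simp
        ultimately show ?thesis using disj[OF n1, of "k - u ! e" k'] kk' by blast
      next
        case False
        define d where "d = u ! e - k"
        have d: "1 \<le> d" "d \<le> h n" "d \<le> \<beta>" using False u_lt[OF e(1)] e(3) st(1) d_def by auto
        have "b - u ! e = \<beta> - d" using st(1) d_def False by simp
        then have "nonC n m (b - u ! e)" using st(4) d by simp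
        then show ?thesis using inb kk' unfolding nonC_def by blast
      qed
    next
      case False
      then have "ncopy m q" using q_noncopy[OF m1 bm(3,1)] q_def t_def by simp
      then have "nonC n (Suc m) q" using noncopy_nonC[OF n1 nm qlt] unfolding ncopy_def by blast
      then show ?thesis using Tx[OF x] kk' unfolding nonC_def by blast
    qed
    then have "P \<inter> E i = {}" using Edef by blast
    then show ?thesis using False P_def m_def by simp
  qed
qed


lemma Tx_gen: assumes "m \<ge> 1" "p + t < h m" "x \<in> Lv m p" shows "(T ^^ t) x \<in> Lv m (p + t)"
  using Tpow[OF assms] by blast

lemma H2: assumes b: "b < h (ell i)" and sub: "Lv (ell i) b \<subseteq> Lv n k'" and c: "c < r (ell i)"
  shows "Lv (Suc (ell i)) (off (ell i) c + b) \<inter> G i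
      = (if c \<in> Cg2 i then Lv (Suc (ell i)) (off (ell i) c + b) else {})"
proof -
  define m where "m = ell i"
  have m1: "m \<ge> 1" using ell1 m_def by simp
  have nm: "n \<le> m" using ell_n m_def by simp
  have sm: "s m = u" using s_ell m_def by simp
  define t where "t = 2 * h m"
  define P where "P = Lv (Suc m) (off m c + b)"
  have bm: "b < h m" "Lv m b \<subseteq> Lv n k'" "c < r m" using assms m_def by auto
  obtain \<beta> where st: "b = \<beta> + k'" "\<beta> + h n \<le> h m" "\<forall>\<kappa>2<h n. Lv m (\<beta>+\<kappa>2) \<subseteq> Lv n \<kappa>2"
    using struct[OF n1 nm bm(1) kk' bm(2)] by blast
  have Gdef: "G i = (T ^^ t) ` Lv n k" unfolding G_def t_def m_def by simp
  have rg: "L < r m" using r_gt[OF m1] .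
  show ?thesis
  proof (cases "c \<in> Cg2 i")
    case True
    then obtain e where e: "e < L" "cond e" "c = r m - L + e" unfolding Cg2_def m_def by auto
    define c' where "c' = r m - L - 1 + e"
    have cc: "Suc c' = c" using e(3) rg c'_def by simp
    define b' where "b' = \<beta> + k"
    have b'h: "b' < h m" using st(2) kk b'_def by simp
    have ub: "s m ! e \<le> b'" using e(2) sm b'_def unfolding cond_def by simp
    have qc: "off m c' + b' + 2 * h m = off m (Suc c') + (b' - s m ! e)" "Suc c' < r m"
      using q_copy[OF m1 e(1) c'_def ub] by auto
    have bb: "b' - s m ! e = b" using e(2) sm b'_def st(1) unfolding cond_def by simp
    have c'r: "c' < r m" using qc(2) by simp
    have "(T ^^ t) ` Lv (Suc m) (off m c' + b') = Lv (Suc m) (off m c' + b' + t)"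
      using Tpow_image[of "Suc m" "off m c' + b'" t] q_lt[OF m1 c'r b'h] t_def by simp
    also have "\<dots> = P" using qc(1) bb cc P_def t_def by simp
    finally have img: "(T ^^ t) ` Lv (Suc m) (off m c' + b') = P" .
    have "Lv (Suc m) (off m c' + b') \<subseteq> Lv m b'" using child_sub[OF m1 c'r b'h] .
    also have "\<dots> \<subseteq> Lv n k" using st(3) kk b'_def by simp
    finally have "P \<subseteq> G i" using img Gdef by blast
    then show ?thesis using True P_def m_def by auto
  next
    case False
    have "z \<notin> G i" if z: "z \<in> P" for z
    proof
      assume "z \<in> G i"
      then obtain y where y: "y \<in> Lv n k" "z = (T ^^ t) y" using Gdef by blast
      obtain a where a: "a < h m" "y \<in> Lv m a" using cover[OF n1 nm kk] y(1) by blast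
      have ak: "Lv m a \<subseteq> Lv n k" using nest_in[OF n1 nm a(1) kk a(2) y(1)] .
      obtain c'' where c'': "c'' < r m" "y \<in> Lv (Suc m) (off m c'' + a)" using refine[OF m1 a(1)] a(2) by blast
      have qlt: "off m c'' + a + t < h (Suc m)" using q_lt[OF m1 c''(1) a(1)] t_def by simp
      have zin: "z \<in> Lv (Suc m) (off m c'' + a + t)" using Tx_gen[of "Suc m" _ t y] qlt c''(2) y(2) by simp
      have pl: "off m c + b < h (Suc m)" using child_lt[OF m1 bm(3,1)] .
      have qeq: "off m c'' + a + t = off m c + b"
        using disj[of "Suc m" "off m c'' + a + t" "off m c + b" z] qlt pl zin z P_def by simp
      show False
      proof (cases "\<exists>e<L. c'' = r m - L - 1 + e \<and> s m ! e \<le> a")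
        case True
        then obtain e where e: "e < L" "c'' = r m - L - 1 + e" "u ! e \<le> a" using sm by auto
        have qc: "off m c'' + a + 2 * h m = off m (Suc c'') + (a - s m ! e)" "Suc c'' < r m"
          using q_copy[OF m1 e(1) e(2)] e(3) sm by auto
        have "off m (Suc c'') + (a - u ! e) = off m c + b" using qc(1) qeq sm t_def by simp
        then have eqs: "Suc c'' = c" "a - u ! e = b" using pos_inj[of m "Suc c''" "a - u ! e" c b] a(1) bm(1) by auto
        obtain \<beta>2 where st2: "a = \<beta>2 + k" "\<beta>2 + h n \<le> h m" "\<forall>\<kappa>2<h n. Lv m (\<beta>2+\<kappa>2) \<subseteq> Lv n \<kappa>2"
           "\<forall>e. 1 \<le> e \<longrightarrow> e \<le> h n \<longrightarrow> e \<le> \<beta>2 \<longrightarrow> nonC n m (\<beta>2 - e)"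
          using struct[OF n1 nm a(1) kk ak] by blast
        show False
        proof (cases "u ! e \<le> k")
          case True
          have "b = \<beta>2 + (k - u ! e)" using True st2(1) eqs(2) by simp
          moreover have ku: "k - u ! e < h n" using kk by simp
          ultimately have "Lv m b \<subseteq> Lv n (k - u ! e)" using st2(3) by metis
          then have "k - u ! e = k'" using lev_eq_nonempty[OF m1 _ bm(2) ku kk'] by blast
          then have "cond e" using True unfolding cond_def by simp
          moreover have "c = r m - L + e" using eqs(1) e(2) rg by simp
          ultimately have "c \<in> Cg2 i" using e(1) unfolding Cg2_def m_def by auto
          then show False using False by simp
        next
          case False
          define d where "d = u ! e - k"
          have d: "1 \<le> d" "d \<le> h n" "d \<le> \<beta>2" using False u_lt[OF e(1)] e(3) st2(1) d_def by auto
          have "b = \<beta>2 - d" using st2(1) d_def False eqs(2) by simp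
          then have "nonC n m b" using st2(4) d by simp
          then show False using bm(2) kk' level_ne[OF m1, of b] unfolding nonC_def by blast
        qed
      next
        case False
        then have "ncopy m (off m c'' + a + 2 * h m)" using q_noncopy[OF m1 c''(1) a(1)] by simp
        then show False using qeq bm(3,1) t_def unfolding ncopy_def by auto
      qed
    qed
    then have "P \<inter> G i = {}" by blast
    then show ?thesis using False P_def m_def by simp
  qed
qed


lemma E_meas: "E i \<in> sets lebesgue"
proof -
  define t where "t = 2 * h (ell i)"
  define S where "S = {(M, p). n \<le> M \<and> p + t < h M \<and> Lv M (p + t) \<subseteq> Lv n k'}"
  have "E i = (\<Union>x\<in>S. Lv (fst x) (snd x))"
  proof
    show "E i \<subseteq> (\<Union>x\<in>S. Lv (fst x) (snd x))"
    proof
      fix x assume x: "x \<in> E i"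
      then have xX: "x \<in> X" "(T ^^ t) x \<in> Lv n k'" unfolding E_def t_def by auto
      obtain M p where Mp: "n \<le> M" "p + t < h M" "x \<in> Lv M p" using room[OF xX(1), of n t] by blast
      have M1: "M \<ge> 1" using Mp n1 by simp
      have "(T ^^ t) x \<in> Lv M (p + t)" using Tx_gen[OF M1 Mp(2,3)] .
      then have "Lv M (p + t) \<subseteq> Lv n k'" using nest_in[OF n1 Mp(1) Mp(2) kk'] xX(2) by blast
      then have "(M, p) \<in> S" using Mp S_def by simp
      then show "x \<in> (\<Union>x\<in>S. Lv (fst x) (snd x))" using Mp(3) by force
    qed
  next
    show "(\<Union>x\<in>S. Lv (fst x) (snd x)) \<subseteq> E i"
    proof
      fix x assume "x \<in> (\<Union>x\<in>S. Lv (fst x) (snd x))"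
      then obtain M p where Mp: "n \<le> M" "p + t < h M" "Lv M (p + t) \<subseteq> Lv n k'" "x \<in> Lv M p"
        unfolding S_def by auto
      have M1: "M \<ge> 1" using Mp n1 by simp
      have "x \<in> X" using level_X[OF M1, of p] Mp by auto
      moreover have "(T ^^ t) x \<in> Lv n k'" using Tx_gen[OF M1 Mp(2,4)] Mp(3) by blast
      ultimately show "x \<in> E i" unfolding E_def t_def by simp
    qed
  qed
  moreover have "(\<Union>x\<in>S. Lv (fst x) (snd x)) \<in> sets lebesgue"
    by (rule sets.countable_UN'') (auto intro: countableI_type)
  ultimately show ?thesis by simp
qed

lemma G_meas: "G i \<in> sets lebesgue"
proof -
  define m where "m = ell i"
  have m1: "m \<ge> 1" using ell1 m_def by simp
  have nm: "n \<le> m" using ell_n m_def by simp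
  define t where "t = 2 * h m"
  define A where "A = {a. a < h m \<and> Lv m a \<subseteq> Lv n k} \<times> {..<r m}"
  have Gdef: "G i = (T ^^ t) ` Lv n k" unfolding G_def t_def m_def by simp
  have "G i = (\<Union>x\<in>A. Lv (Suc m) (off m (snd x) + fst x + t))"
  proof
    show "G i \<subseteq> (\<Union>x\<in>A. Lv (Suc m) (off m (snd x) + fst x + t))"
    proof
      fix z assume "z \<in> G i"
      then obtain y where y: "y \<in> Lv n k" "z = (T ^^ t) y" using Gdef by blast
      obtain a where a: "a < h m" "y \<in> Lv m a" using cover[OF n1 nm kk] y(1) by blast
      have ak: "Lv m a \<subseteq> Lv n k" using nest_in[OF n1 nm a(1) kk a(2) y(1)] .
      obtain c where c: "c < r m" "y \<in> Lv (Suc m) (off m c + a)" using refine[OF m1 a(1)] a(2) by blast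
      have qlt: "off m c + a + t < h (Suc m)" using q_lt[OF m1 c(1) a(1)] t_def by simp
      have "z \<in> Lv (Suc m) (off m c + a + t)" using Tx_gen[of "Suc m" _ t y] qlt c(2) y(2) by simp
      moreover have "(a, c) \<in> A" using A_def a ak c by simp
      ultimately show "z \<in> (\<Union>x\<in>A. Lv (Suc m) (off m (snd x) + fst x + t))" by force
    qed
  next
    show "(\<Union>x\<in>A. Lv (Suc m) (off m (snd x) + fst x + t)) \<subseteq> G i"
    proof
      fix z assume "z \<in> (\<Union>x\<in>A. Lv (Suc m) (off m (snd x) + fst x + t))"
      then obtain a c where ac: "a < h m" "Lv m a \<subseteq> Lv n k" "c < r m" "z \<in> Lv (Suc m) (off m c + a + t)"
        unfolding A_def by auto
      have qlt: "off m c + a + t < h (Suc m)" using q_lt[OF m1 ac(3) ac(1)] t_def by simp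
      have "z \<in> (T ^^ t) ` Lv (Suc m) (off m c + a)"
        using Tpow_image[of "Suc m" "off m c + a" t] qlt ac(4) by simp
      moreover have "Lv (Suc m) (off m c + a) \<subseteq> Lv n k" using child_sub[OF m1 ac(3,1)] ac(2) by blast
      ultimately show "z \<in> G i" using Gdef by blast
    qed
  qed
  moreover have "(\<Union>x\<in>A. Lv (Suc m) (off m (snd x) + fst x + t)) \<in> sets lebesgue"
    by (rule sets.countable_UN'') (auto intro: countableI_type)
  ultimately show ?thesis by simp
qed

lemma emeas_level: "emeasure lebesgue (Lv n \<kappa>) = ennreal (w n)"
  using w_pos[OF n1] unfolding level_def by simp

lemma indep_generic:
  fixes Base :: "real set" and Ev :: "nat \<Rightarrow> real set" and Cg :: "nat \<Rightarrow> nat set" and \<kappa> :: nat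
  assumes kb: "\<kappa> < h n" and Bdef: "Base = Lv n \<kappa>"
    and evm: "\<forall>i. Ev i \<in> sets lebesgue"
    and Cgsub: "\<forall>i. Cg i \<subseteq> {..<r (ell i)}" and Cgcard: "\<forall>i. card (Cg i) = \<delta>"
    and H: "\<forall>i b c. b < h (ell i) \<longrightarrow> Lv (ell i) b \<subseteq> Base \<longrightarrow> c < r (ell i) \<longrightarrow>
        Lv (Suc (ell i)) (off (ell i) c + b) \<inter> Ev i
          = (if c \<in> Cg i then Lv (Suc (ell i)) (off (ell i) c + b) else {})"
  shows "prob_space.indep_events (uniform_measure lebesgue Base) Ev UNIV"
proof -
  have wp: "w n > 0" using w_pos[OF n1] .
  have e0: "emeasure lebesgue Base \<noteq> 0" "emeasure lebesgue Base \<noteq> \<infinity>"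
    using emeas_level wp Bdef by auto
  interpret P: prob_space "uniform_measure lebesgue Base"
    by (rule prob_space_uniform_measure[OF e0])
  have mB: "measure lebesgue Base = w n" using level_measure[OF n1] Bdef by simp
  have PF: "measure lebesgue (Base \<inter> (\<Inter>i\<in>F. Ev i)) = w n * (\<Prod>i\<in>F. real \<delta> / real (r (ell i)))"
    if "finite F" for F
    using prodform[OF n1 ell_mono _ evm Cgsub Cgcard H that] ell_n kb Bdef by auto
  have INTm: "(\<Inter>i\<in>F. Ev i) \<in> sets lebesgue" if "finite F" "F \<noteq> {}" for F
    using that evm by (intro sets.finite_INT) auto
  show ?thesis
    unfolding P.indep_events_def
  proof (intro conjI allI impI)
    show "Ev ` UNIV \<subseteq> P.events" using evm by auto
  next
    fix F :: "nat set" assume F: "F \<subseteq> UNIV" "F \<noteq> {}" "finite F"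
    have "P.prob (\<Inter>i\<in>F. Ev i) = measure lebesgue (Base \<inter> (\<Inter>i\<in>F. Ev i)) / measure lebesgue Base"
      using measure_uniform_measure[OF e0 INTm[OF F(3,2)]] .
    also have "\<dots> = (\<Prod>i\<in>F. real \<delta> / real (r (ell i)))" using PF[OF F(3)] mB wp by simp
    also have "\<dots> = (\<Prod>i\<in>F. P.prob (Ev i))"
    proof (rule prod.cong)
      fix i assume "i \<in> F"
      have "P.prob (Ev i) = measure lebesgue (Base \<inter> (\<Inter>i\<in>{i}. Ev i)) / measure lebesgue Base"
        using measure_uniform_measure[OF e0] evm by simp
      also have "\<dots> = real \<delta> / real (r (ell i))" using PF[of "{i}"] mB wp by simp
      finally show "real \<delta> / real (r (ell i)) = P.prob (Ev i)" by simp
    qed simp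
    finally show "P.prob (\<Inter>i\<in>F. Ev i) = (\<Prod>i\<in>F. P.prob (Ev i))" .
  qed
qed

lemma indep1: "prob_space.indep_events (uniform_measure lebesgue (Lv n k)) E UNIV"
  by (rule indep_generic[OF kk refl, of E Cg1]) (use E_meas Cg1_sub Cg1_card H1 in auto)

lemma indep2: "prob_space.indep_events (uniform_measure lebesgue (Lv n k')) G UNIV"
  by (rule indep_generic[OF kk' refl, of G Cg2]) (use G_meas Cg2_sub Cg2_card H2 in auto)

end

theorem mainTheorem10:
  fixes L :: nat and v s :: "nat \<Rightarrow> nat list" and r :: "nat \<Rightarrow> nat"
    and lev :: "nat \<Rightarrow> nat \<Rightarrow> real" and w :: "nat \<Rightarrow> real"
    and X :: "real set" and T :: "real \<Rightarrow> real"
    and n k k' j :: nat and I J :: "real set" and t :: "nat \<Rightarrow> nat"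
  assumes "VLstar L v s r lev w X T"
    and "n \<ge> 1"
    and "k < hgt L r s n" and "k' < hgt L r s n"
    and "I = level lev w n k" and "J = level lev w n k'"
    and "j \<ge> 1" and "last (v j) < hgt L r s n"
    and "t = (\<lambda>i. 2 * hgt L r s (2 ^ (j - 1) + (i + n) * 2 ^ j))"
  shows "prob_space.indep_events (uniform_measure lebesgue I)
           (\<lambda>i. {x \<in> X. (T ^^ t i) x \<in> J}) UNIV
       \<and> prob_space.indep_events (uniform_measure lebesgue J)
           (\<lambda>i. (T ^^ t i) ` I) UNIV"
proof -
  interpret VLP L v s r lev w X T n k k' j
    by unfold_locales (use assms in auto)
  have E: "(\<lambda>i. {x \<in> X. (T ^^ t i) x \<in> J}) = E"
    unfolding E_def ell_def using assms by auto
  have G: "(\<lambda>i. (T ^^ t i) ` I) = G"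
    unfolding G_def ell_def using assms by auto
  show ?thesis using indep1 indep2 E G assms(5,6) by simp
qed


end
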